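(* Let $S$ be a semigroup, $\Lambda$ a row-finite $k$-graph and $\eta:\Lambda\to S$ a functor, and suppose there is a map $\phi:S\to\mathbb{Z}^k$ such that $d=\phi\circ\eta$. Then the skew product graph $\Lambda\times_\eta S$ is aperiodic.
   Context: All semigroups are countable, cancellative, with identity. A $k$-graph is a countable category $\Lambda$ with a functor $d:\Lambda\to\mathbb{N}^k$ with unique factorisation; $\Lambda^n=d^{-1}(n)$, $\Lambda^0$ = vertices, $v\Lambda=\{\lambda:r(\lambda)=v\}$; row-finite: $v\Lambda^n$ finite. The skew product $\Lambda\times_\eta S$ has vertices $\Lambda^0\times S$, morphisms $\Lambda\times S$, $r(\lambda,t)=(r(\lambda),t)$, $s(\lambda,t)=(s(\lambda),t\eta(\lambda))$, $(\lambda,t)(\mu,t\eta(\lambda))=(\lambda\mu,t)$, $d(\lambda,t)=d(\lambda)$. For $\lambda$ and $m\le n\le d(\lambda)$, $\lambda(m,n)$ is the unique path of degree $n-m$ with $\lambda=\lambda'\lambda(m,n)\lambda''$, $d(\lambda')=m$. A $k$-graph $\Gamma$ is aperiodic if for every $v\in\Gamma^0$ and all $m\neq n\in\mathbb{N}^k$ there is $\lambda\in v\Gamma$ with $d(\lambda)\ge m\vee n$ and $\lambda(m,m+d(\lambda)-(m\vee n))\ne\lambda(n,n+d(\lambda)-(m\vee n))$, where $(m\vee n)_i=\max\{m_i,n_i\}$.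
   Formalization: The row-finite k-graph Lambda also has no sources: the set $v\Lambda^n$ is nonempty for every vertex v and every n in $\mathbb{N}^k$. The paper assumes this as well. *)

theory Defs
  imports Main "HOL-Library.Countable_Set"
begin

text \<open>A k-graph is given by its set of morphisms Mor, range and source maps r, s
(vertices are identified with identity morphisms, i.e. elements x of Mor with r x = x),
a partial composition cmp (meaningful when s x = r y), and a degree functor
d into N^k, where N^k is modelled as 'k \<Rightarrow> nat for a finite index type 'k
(so k = CARD('k)).\<close>

definition kgraph ::
  "'a set \<Rightarrow> ('a \<Rightarrow> 'a) \<Rightarrow> ('a \<Rightarrow> 'a) \<Rightarrow> ('a \<Rightarrow> 'a \<Rightarrow> 'a) \<Rightarrow> ('a \<Rightarrow> 'k::finite \<Rightarrow> nat) \<Rightarrow> bool"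
where
  "kgraph Mor r s cmp d \<longleftrightarrow>
     countable Mor \<and>
     (\<forall>x\<in>Mor. r x \<in> Mor \<and> s x \<in> Mor \<and>
        r (r x) = r x \<and> s (r x) = r x \<and> r (s x) = s x \<and> s (s x) = s x) \<and>
     (\<forall>x\<in>Mor. \<forall>y\<in>Mor. s x = r y \<longrightarrow>
        cmp x y \<in> Mor \<and> r (cmp x y) = r x \<and> s (cmp x y) = s y) \<and>
     (\<forall>x\<in>Mor. cmp (r x) x = x \<and> cmp x (s x) = x) \<and>
     (\<forall>x\<in>Mor. \<forall>y\<in>Mor. \<forall>z\<in>Mor. s x = r y \<longrightarrow> s y = r z \<longrightarrow>
        cmp (cmp x y) z = cmp x (cmp y z)) \<and>
     (\<forall>x\<in>Mor. \<forall>y\<in>Mor. s x = r y \<longrightarrow> d (cmp x y) = (\<lambda>i. d x i + d y i)) \<and>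
     (\<forall>l\<in>Mor. \<forall>m n. d l = (\<lambda>i. m i + n i) \<longrightarrow>
        (\<exists>!p. fst p \<in> Mor \<and> snd p \<in> Mor \<and> s (fst p) = r (snd p) \<and>
              cmp (fst p) (snd p) = l \<and> d (fst p) = m \<and> d (snd p) = n))"

definition kvertices :: "'a set \<Rightarrow> ('a \<Rightarrow> 'a) \<Rightarrow> 'a set" where
  "kvertices Mor r = {x \<in> Mor. r x = x}"

definition row_finite ::
  "'a set \<Rightarrow> ('a \<Rightarrow> 'a) \<Rightarrow> ('a \<Rightarrow> 'k \<Rightarrow> nat) \<Rightarrow> bool" where
  "row_finite Mor r d \<longleftrightarrow>
     (\<forall>v\<in>kvertices Mor r. \<forall>n. finite {l \<in> Mor. r l = v \<and> d l = n})"

definition no_sources ::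
  "'a set \<Rightarrow> ('a \<Rightarrow> 'a) \<Rightarrow> ('a \<Rightarrow> 'k \<Rightarrow> nat) \<Rightarrow> bool" where
  "no_sources Mor r d \<longleftrightarrow>
     (\<forall>v\<in>kvertices Mor r. \<forall>n. {l \<in> Mor. r l = v \<and> d l = n} \<noteq> {})"

definition kfunctor ::
  "'a set \<Rightarrow> ('a \<Rightarrow> 'a) \<Rightarrow> ('a \<Rightarrow> 'a) \<Rightarrow> ('a \<Rightarrow> 'a \<Rightarrow> 'a) \<Rightarrow> ('a \<Rightarrow> 's::monoid_mult) \<Rightarrow> bool"
where
  "kfunctor Mor r s cmp eta \<longleftrightarrow>
     (\<forall>v\<in>kvertices Mor r. eta v = 1) \<and>
     (\<forall>x\<in>Mor. \<forall>y\<in>Mor. s x = r y \<longrightarrow> eta (cmp x y) = eta x * eta y)"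

definition cancellative_monoid :: "'s::monoid_mult itself \<Rightarrow> bool" where
  "cancellative_monoid _ \<longleftrightarrow>
     countable (UNIV :: 's set) \<and>
     (\<forall>a b c :: 's. a * b = a * c \<longrightarrow> b = c) \<and>
     (\<forall>a b c :: 's. b * a = c * a \<longrightarrow> b = c)"

definition skew_r :: "('a \<Rightarrow> 'a) \<Rightarrow> 'a \<times> 's \<Rightarrow> 'a \<times> 's" where
  "skew_r r = (\<lambda>(l, t). (r l, t))"

definition skew_s :: "('a \<Rightarrow> 'a) \<Rightarrow> ('a \<Rightarrow> 's::monoid_mult) \<Rightarrow> 'a \<times> 's \<Rightarrow> 'a \<times> 's" where
  "skew_s s eta = (\<lambda>(l, t). (s l, t * eta l))"

definition skew_comp :: "('a \<Rightarrow> 'a \<Rightarrow> 'a) \<Rightarrow> 'a \<times> 's \<Rightarrow> 'a \<times> 's \<Rightarrow> 'a \<times> 's" where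
  "skew_comp cmp = (\<lambda>(l, t) (m, u). (cmp l m, t))"

definition skew_d :: "('a \<Rightarrow> 'k \<Rightarrow> nat) \<Rightarrow> 'a \<times> 's \<Rightarrow> 'k \<Rightarrow> nat" where
  "skew_d d = (\<lambda>(l, t). d l)"

definition seg ::
  "'a set \<Rightarrow> ('a \<Rightarrow> 'a) \<Rightarrow> ('a \<Rightarrow> 'a) \<Rightarrow> ('a \<Rightarrow> 'a \<Rightarrow> 'a) \<Rightarrow> ('a \<Rightarrow> 'k \<Rightarrow> nat)
    \<Rightarrow> 'a \<Rightarrow> ('k \<Rightarrow> nat) \<Rightarrow> ('k \<Rightarrow> nat) \<Rightarrow> 'a" where
  "seg Mor r s cmp d l m n =
     (THE \<mu>. \<mu> \<in> Mor \<and> d \<mu> = (\<lambda>i. n i - m i) \<and>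
        (\<exists>l1\<in>Mor. \<exists>l2\<in>Mor. s l1 = r \<mu> \<and> s \<mu> = r l2 \<and>
            cmp (cmp l1 \<mu>) l2 = l \<and> d l1 = m))"

definition aperiodic ::
  "'a set \<Rightarrow> ('a \<Rightarrow> 'a) \<Rightarrow> ('a \<Rightarrow> 'a) \<Rightarrow> ('a \<Rightarrow> 'a \<Rightarrow> 'a) \<Rightarrow> ('a \<Rightarrow> 'k \<Rightarrow> nat) \<Rightarrow> bool" where
  "aperiodic Mor r s cmp d \<longleftrightarrow>
     (\<forall>v\<in>kvertices Mor r. \<forall>m n :: 'k \<Rightarrow> nat. m \<noteq> n \<longrightarrow>
        (let j = (\<lambda>i. max (m i) (n i)) in
         \<exists>l\<in>Mor. r l = v \<and> j \<le> d l \<and>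
           seg Mor r s cmp d l m (\<lambda>i. m i + d l i - j i)
             \<noteq> seg Mor r s cmp d l n (\<lambda>i. n i + d l i - j i)))"

end

theory Submission
  imports Defs
begin

lemma kgD:
  assumes "kgraph Mor r s cmp d"
  shows kg_rs: "\<And>x. x\<in>Mor \<Longrightarrow> r x \<in> Mor \<and> s x \<in> Mor \<and>
        r (r x) = r x \<and> s (r x) = r x \<and> r (s x) = s x \<and> s (s x) = s x"
  and kg_cmp: "\<And>x y. x\<in>Mor \<Longrightarrow> y\<in>Mor \<Longrightarrow> s x = r y \<Longrightarrow>
        cmp x y \<in> Mor \<and> r (cmp x y) = r x \<and> s (cmp x y) = s y"
  and kg_id: "\<And>x. x\<in>Mor \<Longrightarrow> cmp (r x) x = x \<and> cmp x (s x) = x"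
  and kg_deg: "\<And>x y. x\<in>Mor \<Longrightarrow> y\<in>Mor \<Longrightarrow> s x = r y \<Longrightarrow> d (cmp x y) = (\<lambda>i. d x i + d y i)"
  and kg_uf: "\<And>l m n. l\<in>Mor \<Longrightarrow> d l = (\<lambda>i. m i + n i) \<Longrightarrow>
        (\<exists>!p. fst p \<in> Mor \<and> snd p \<in> Mor \<and> s (fst p) = r (snd p) \<and>
              cmp (fst p) (snd p) = l \<and> d (fst p) = m \<and> d (snd p) = n)"
  using assms unfolding kgraph_def by simp_all

lemma ex1_uniq: "\<exists>!x. Q x \<Longrightarrow> Q a \<Longrightarrow> Q b \<Longrightarrow> a = b" by blast

lemma kg_vert_deg:
  assumes kg: "kgraph Mor r s cmp d" and x: "x \<in> Mor"
  shows "d (r x) = (\<lambda>i. 0)"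
proof -
  have rx: "r x \<in> Mor" "s (r x) = r x" "r (r x) = r x" using kg_rs[OF kg x] by auto
  have c: "cmp (r x) (r x) = r x" using kg_id[OF kg rx(1)] rx by simp
  have "d (cmp (r x) (r x)) = (\<lambda>i. d (r x) i + d (r x) i)"
    using kg_deg[OF kg rx(1) rx(1)] rx by simp
  then have "d (r x) = (\<lambda>i. d (r x) i + d (r x) i)" using c by simp
  then show ?thesis by (simp add: fun_eq_iff)
qed

lemma kg_vert_deg_s:
  assumes kg: "kgraph Mor r s cmp d" and x: "x \<in> Mor"
  shows "d (s x) = (\<lambda>i. 0)"
proof -
  have "s x \<in> Mor" "r (s x) = s x" using kg_rs[OF kg x] by auto
  then show ?thesis using kg_vert_deg[OF kg, of "s x"] by simp
qed

lemma kg_deg0: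
  assumes kg: "kgraph Mor r s cmp d" and x: "x \<in> Mor" and dx: "d x = (\<lambda>i. 0)"
  shows "r x = x \<and> s x = x"
proof -
  have facts: "r x \<in> Mor" "s x \<in> Mor" "s (r x) = r x" "r (s x) = s x"
      "cmp (r x) x = x" "cmp x (s x) = x"
    using kg_rs[OF kg x] kg_id[OF kg x] by auto
  have dr: "d (r x) = (\<lambda>i. 0)" "d (s x) = (\<lambda>i. 0)"
    using kg_vert_deg[OF kg x] kg_vert_deg_s[OF kg x] by auto
  have "\<exists>!p. fst p \<in> Mor \<and> snd p \<in> Mor \<and> s (fst p) = r (snd p) \<and>
              cmp (fst p) (snd p) = x \<and> d (fst p) = (\<lambda>i. 0) \<and> d (snd p) = (\<lambda>i. 0)"
    using kg_uf[OF kg x, of "\<lambda>i. 0" "\<lambda>i. 0"] dx by simp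
  then have "(r x, x) = (x, s x)"
    by (rule ex1_uniq) (use facts dr dx x in auto)
  then show ?thesis by simp
qed

lemma seg_skew:
  assumes kg: "kgraph Mor r s cmp d" and kf: "kfunctor Mor r s cmp eta"
    and l: "l \<in> Mor" and ml: "m \<le> d l"
  shows "\<exists>a\<in>Mor. d a = m \<and>
    seg (Mor \<times> (UNIV :: 's::monoid_mult set)) (skew_r r) (skew_s s eta) (skew_comp cmp) (skew_d d) (l, t) m m
      = (s a, t * eta a)"
proof -
  define m' where "m' = (\<lambda>i. d l i - m i)"
  have dl: "d l = (\<lambda>i. m i + m' i)" using ml unfolding m'_def le_fun_def by auto
  have uf: "\<exists>!p. fst p \<in> Mor \<and> snd p \<in> Mor \<and> s (fst p) = r (snd p) \<and>
              cmp (fst p) (snd p) = l \<and> d (fst p) = m \<and> d (snd p) = m'"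
    using kg_uf[OF kg l dl] .
  then obtain a b where ab: "a \<in> Mor" "b \<in> Mor" "s a = r b" "cmp a b = l" "d a = m" "d b = m'"
    by auto
  have sa: "s a \<in> Mor" "r (s a) = s a" "s (s a) = s a" "cmp a (s a) = a"
    using kg_rs[OF kg ab(1)] kg_id[OF kg ab(1)] by auto
  have esa: "eta (s a) = 1" using kf sa unfolding kfunctor_def kvertices_def by auto
  have dsa: "d (s a) = (\<lambda>i. 0)" using kg_vert_deg_s[OF kg ab(1)] .
  let ?P = "\<lambda>\<mu>. \<mu> \<in> Mor \<times> (UNIV :: 's set) \<and> skew_d d \<mu> = (\<lambda>i. m i - m i) \<and>
        (\<exists>l1\<in>Mor \<times> (UNIV :: 's set). \<exists>l2\<in>Mor \<times> (UNIV :: 's set).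
            skew_s s eta l1 = skew_r r \<mu> \<and> skew_s s eta \<mu> = skew_r r l2 \<and>
            skew_comp cmp (skew_comp cmp l1 \<mu>) l2 = (l, t) \<and> skew_d d l1 = m)"
  have ex: "?P (s a, t * eta a)"
  proof -
    have "skew_s s eta (a, t) = skew_r r (s a, t * eta a)"
      using sa by (simp add: skew_s_def skew_r_def)
    moreover have "skew_s s eta (s a, t * eta a) = skew_r r (b, t * eta a)"
      using sa esa ab by (simp add: skew_s_def skew_r_def)
    moreover have "skew_comp cmp (skew_comp cmp (a, t) (s a, t * eta a)) (b, t * eta a) = (l, t)"
      using sa ab by (simp add: skew_comp_def)
    moreover have "skew_d d (a, t) = m" using ab by (simp add: skew_d_def)
    ultimately show ?thesis using sa ab dsa by (auto simp: skew_d_def)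
  qed
  have un: "\<mu> = (s a, t * eta a)" if P: "?P \<mu>" for \<mu>
  proof -
    obtain \<mu>0 u where mu: "\<mu> = (\<mu>0, u)" by fastforce
    from P obtain a' t1 b' t2 where
      h: "\<mu>0 \<in> Mor" "d \<mu>0 = (\<lambda>i. 0)" "a' \<in> Mor" "b' \<in> Mor"
         "s a' = r \<mu>0" "u = t1 * eta a'" "s \<mu>0 = r b'" "cmp (cmp a' \<mu>0) b' = l" "t1 = t"
         "d a' = m"
      unfolding mu by (auto simp: skew_d_def skew_s_def skew_r_def skew_comp_def)
    have v: "r \<mu>0 = \<mu>0" "s \<mu>0 = \<mu>0" using kg_deg0[OF kg h(1) h(2)] by auto
    have ca: "cmp a' \<mu>0 = a'" using kg_id[OF kg h(3)] h(5) v by simp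
    have comp: "s a' = r b'" "cmp a' b' = l" using h v ca by auto
    have "d l = (\<lambda>i. d a' i + d b' i)" using kg_deg[OF kg h(3,4) comp(1)] comp(2) by simp
    then have "d b' = m'" using h(10) unfolding m'_def by (auto simp: fun_eq_iff)
    then have "(a', b') = (a, b)"
      by (intro ex1_uniq[OF uf]) (use ab h(3,4,10) comp in auto)
    then show ?thesis using mu h(5,6,9) v by auto
  qed
  have "seg (Mor \<times> (UNIV :: 's set)) (skew_r r) (skew_s s eta) (skew_comp cmp) (skew_d d) (l, t) m m
      = (s a, t * eta a)"
    unfolding seg_def by (rule the_equality, rule ex, rule un)
  then show ?thesis using ab by blast
qed

theorem proposition3p6:
  fixes Mor :: "'a set" and r s :: "'a \<Rightarrow> 'a" and cmp :: "'a \<Rightarrow> 'a \<Rightarrow> 'a"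
    and d :: "'a \<Rightarrow> 'k::finite \<Rightarrow> nat"
    and eta :: "'a \<Rightarrow> 's::monoid_mult"
    and phi :: "'s \<Rightarrow> 'k \<Rightarrow> int"
  assumes "cancellative_monoid TYPE('s)"
    and "kgraph Mor r s cmp d"
    and "row_finite Mor r d"
    and "no_sources Mor r d"
    and "kfunctor Mor r s cmp eta"
    and "\<forall>l\<in>Mor. phi (eta l) = (\<lambda>i. int (d l i))"
  shows "aperiodic (Mor \<times> (UNIV :: 's set)) (skew_r r) (skew_s s eta) (skew_comp cmp) (skew_d d)"
  unfolding aperiodic_def Let_def
proof (intro ballI allI impI)
  fix v and m n :: "'k \<Rightarrow> nat"
  assume v: "v \<in> kvertices (Mor \<times> (UNIV :: 's set)) (skew_r r)" and mn: "m \<noteq> n"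
  obtain v0 t where vt: "v = (v0, t)" by fastforce
  have v0: "v0 \<in> Mor" "r v0 = v0" using v vt by (auto simp: kvertices_def skew_r_def)
  define j where "j = (\<lambda>i. max (m i) (n i))"
  note jd = j_def[symmetric]
  have "v0 \<in> kvertices Mor r" using v0 by (simp add: kvertices_def)
  then have "{l \<in> Mor. r l = v0 \<and> d l = j} \<noteq> {}"
    using assms(4) unfolding no_sources_def by blast
  then obtain l where l: "l \<in> Mor" "r l = v0" "d l = j" by blast
  have mj: "m \<le> d l" "n \<le> d l" using l(3) unfolding j_def le_fun_def by auto
  obtain a where a: "a \<in> Mor" "d a = m" and sega:
    "seg (Mor \<times> (UNIV :: 's set)) (skew_r r) (skew_s s eta) (skew_comp cmp) (skew_d d) (l, t) m m
      = (s a, t * eta a)"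
    using seg_skew[OF assms(2) assms(5) l(1) mj(1)] by blast
  obtain b where b: "b \<in> Mor" "d b = n" and segb:
    "seg (Mor \<times> (UNIV :: 's set)) (skew_r r) (skew_s s eta) (skew_comp cmp) (skew_d d) (l, t) n n
      = (s b, t * eta b)"
    using seg_skew[OF assms(2) assms(5) l(1) mj(2)] by blast
  have e1: "(\<lambda>i. m i + skew_d d (l, t) i - j i) = m" using l(3) by (simp add: skew_d_def)
  have e2: "(\<lambda>i. n i + skew_d d (l, t) i - j i) = n" using l(3) by (simp add: skew_d_def)
  have ne: "(s a, t * eta a) \<noteq> (s b, t * eta b)"
  proof
    assume "(s a, t * eta a) = (s b, t * eta b)"
    then have tt: "t * eta a = t * eta b" by simp
    have "\<forall>x y z :: 's. x * y = x * z \<longrightarrow> y = z"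
      using assms(1) unfolding cancellative_monoid_def by (rule conjunct1[OF conjunct2])
    then have "eta a = eta b" using tt by blast
    then have "phi (eta a) = phi (eta b)" by simp
    then have "(\<lambda>i. int (d a i)) = (\<lambda>i. int (d b i))" using assms(6) a b by auto
    then have "d a = d b" by (auto simp: fun_eq_iff)
    then show False using a b mn by simp
  qed
  show "\<exists>la\<in>Mor \<times> UNIV. skew_r r la = v \<and> j \<le> skew_d d la \<and>
           seg (Mor \<times> UNIV) (skew_r r) (skew_s s eta) (skew_comp cmp) (skew_d d) la m
             (\<lambda>i. m i + skew_d d la i - j i) \<noteq>
           seg (Mor \<times> UNIV) (skew_r r) (skew_s s eta) (skew_comp cmp) (skew_d d) la n
             (\<lambda>i. n i + skew_d d la i - j i)"
  unfolding jd
  proof (rule bexI[of _ "(l, t)"])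
    show "(l, t) \<in> Mor \<times> UNIV" using l by simp
    show "skew_r r (l, t) = v \<and> j \<le> skew_d d (l, t) \<and>
           seg (Mor \<times> UNIV) (skew_r r) (skew_s s eta) (skew_comp cmp) (skew_d d) (l, t) m
             (\<lambda>i. m i + skew_d d (l, t) i - j i) \<noteq>
           seg (Mor \<times> UNIV) (skew_r r) (skew_s s eta) (skew_comp cmp) (skew_d d) (l, t) n
             (\<lambda>i. n i + skew_d d (l, t) i - j i)"
      unfolding e1 e2 sega segb using ne l vt by (simp add: skew_r_def skew_d_def)
  qed
qed

end
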